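(* Let $\xi$ be a DoS sequence with infinitely many intervals $H_n$ that is not an edge case. Then $$\limsup_{n\to\infty}\frac{\lvert\Xi(0,h_n+\tau_n)\rvert}{h_n+\tau_n} = \inf\mathcal{D}(\xi)\quad\text{and}\quad \limsup_{n\to\infty}\frac{n}{h_n}=\inf\mathcal{F}(\xi).$$
   Context: A DoS sequence $\xi=\{H_n\}_{n\in\mathbb{N}_+}$ is a sequence of sets $H_n := \{h_n\}\cup[h_n,h_n+\tau_n)$, where $h_1\geqslant 0$, $\tau_n\geqslant 0$ and $h_{n+1} > h_n+\tau_n$ for all $n$. For $0\leqslant \tau\leqslant s$ let $\Xi(\tau,s) := \bigcup_n H_n\cap[\tau,s]$ and $n_\xi(\tau,s) := \operatorname{card}(\{h_n\}_n\cap[\tau,s])$; $\lvert\cdot\rvert$ denotes Lebesgue measure. A constant $B_d\in[0,1]$ is a duration-bound of $\xi$ if there is a constant $0<\kappa<+\infty$ with $\lvert \Xi(0,t)\rvert\leqslant \kappa + B_d t$ for all $t\geqslant 0$. A constant $B_f\in[0,+\infty)$ is a frequency-bound of $\xi$ if there is an integer $0<\Lambda<+\infty$ with $n_\xi(0,t)\leqslant \Lambda + B_f t$ for all $t\geqslant 0$; if no such finite $B_f$ exists, the frequency-bound is defined to be $+\infty$. $\mathcal{D}(\xi)$ and $\mathcal{F}(\xi)$ denote the sets of all duration-bounds and frequency-bounds of $\xi$. $\xi$ is an edge case if (i) $\inf\mathcal{D}(\xi)=1$, or (ii) $\inf\mathcal{F}(\xi)=+\infty$, or (iii) for every $\Gamma\in(0,+\infty)$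 there is $n$ with $\tau_n>\Gamma$. *)

theory Defs
  imports "HOL-Analysis.Analysis"
begin

text \<open>A DoS sequence is given by two real sequences h, tau indexed by n \<ge> 1
  (values at index 0 are irrelevant).\<close>

definition dos_seq :: "(nat \<Rightarrow> real) \<Rightarrow> (nat \<Rightarrow> real) \<Rightarrow> bool" where
  "dos_seq h \<tau> \<longleftrightarrow> h 1 \<ge> 0 \<and> (\<forall>n\<ge>1. \<tau> n \<ge> 0) \<and> (\<forall>n\<ge>1. h (Suc n) > h n + \<tau> n)"

definition H_int :: "(nat \<Rightarrow> real) \<Rightarrow> (nat \<Rightarrow> real) \<Rightarrow> nat \<Rightarrow> real set" where
  "H_int h \<tau> n = {h n} \<union> {h n ..< h n + \<tau> n}"

definition Xi :: "(nat \<Rightarrow> real) \<Rightarrow> (nat \<Rightarrow> real) \<Rightarrow> real \<Rightarrow> real \<Rightarrow> real set" where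
  "Xi h \<tau> a b = (\<Union>n\<in>{1..}. H_int h \<tau> n) \<inter> {a..b}"

definition n_xi :: "(nat \<Rightarrow> real) \<Rightarrow> real \<Rightarrow> real \<Rightarrow> ereal" where
  "n_xi h a b = (let S = {h n | n. n \<ge> 1} \<inter> {a..b} in
                  if finite S then ereal (real (card S)) else \<infinity>)"

definition dur_bounds :: "(nat \<Rightarrow> real) \<Rightarrow> (nat \<Rightarrow> real) \<Rightarrow> real set" where
  "dur_bounds h \<tau> = {Bd. 0 \<le> Bd \<and> Bd \<le> 1 \<and>
      (\<exists>\<kappa>>0. \<forall>t\<ge>0. measure lborel (Xi h \<tau> 0 t) \<le> \<kappa> + Bd * t)}"

definition freq_bounds :: "(nat \<Rightarrow> real) \<Rightarrow> real set" where
  "freq_bounds h = {Bf. 0 \<le> Bf \<and>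
      (\<exists>\<Lambda>::nat. \<Lambda> > 0 \<and> (\<forall>t\<ge>0. n_xi h 0 t \<le> ereal (real \<Lambda> + Bf * t)))}"

text \<open>Infima taken in the extended reals; the infimum of an empty set of
  frequency bounds is +infinity, as in the paper's convention.\<close>
definition inf_D :: "(nat \<Rightarrow> real) \<Rightarrow> (nat \<Rightarrow> real) \<Rightarrow> ereal" where
  "inf_D h \<tau> = Inf (ereal ` dur_bounds h \<tau>)"

definition inf_F :: "(nat \<Rightarrow> real) \<Rightarrow> ereal" where
  "inf_F h = Inf (ereal ` freq_bounds h)"

definition edge_case :: "(nat \<Rightarrow> real) \<Rightarrow> (nat \<Rightarrow> real) \<Rightarrow> bool" where
  "edge_case h \<tau> \<longleftrightarrow> inf_D h \<tau> = 1 \<or> inf_F h = \<infinity> \<or>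
      (\<forall>\<Gamma>>0. \<exists>n\<ge>1. \<tau> n > \<Gamma>)"

end

theory Submission
  imports Defs
begin

lemma dos_mono_aux:
  assumes "dos_seq h \<tau>" "1 \<le> m"
  shows "h m + \<tau> m < h (m + Suc k)"
proof (induction k)
  case 0
  then show ?case using assms unfolding dos_seq_def by auto
next
  case (Suc k)
  have "h (m + Suc k) + \<tau> (m + Suc k) < h (Suc (m + Suc k))"
    "\<tau> (m + Suc k) \<ge> 0" using assms unfolding dos_seq_def by auto
  then show ?case using Suc by simp
qed

lemma dos_mono:
  assumes "dos_seq h \<tau>" "1 \<le> m" "m < n"
  shows "h m + \<tau> m < h n" "h m < h n"
proof -
  obtain k where k: "n = m + Suc k" using less_imp_Suc_add[OF assms(3)] by auto
  have "h m + \<tau> m < h (m + Suc k)" by (rule dos_mono_aux[OF assms(1,2)])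
  then show A: "h m + \<tau> m < h n" using k by simp
  have "\<tau> m \<ge> 0" using assms(1,2) unfolding dos_seq_def by auto
  then show "h m < h n" using A by linarith
qed

lemma dos_mono_le:
  assumes "dos_seq h \<tau>" "1 \<le> m" "m \<le> n"
  shows "h m \<le> h n"
proof (cases "m = n")
  case False
  then have "m < n" using assms(3) by simp
  then show ?thesis using dos_mono(2)[OF assms(1,2)] by (simp add: less_imp_le)
qed simp

lemma dos_nonneg:
  assumes "dos_seq h \<tau>" "1 \<le> n"
  shows "h n \<ge> 0" "\<tau> n \<ge> 0"
proof -
  have "h 1 \<ge> 0" using assms unfolding dos_seq_def by auto
  then show "h n \<ge> 0" using dos_mono_le[OF assms(1) _ assms(2)] by fastforce
  show "\<tau> n \<ge> 0" using assms unfolding dos_seq_def by auto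
qed

lemma Xi_sets: "Xi h \<tau> a b \<in> sets lborel"
  unfolding Xi_def H_int_def by (intro sets.Int sets.countable_UN'') auto

lemma Xi_sub: "Xi h \<tau> 0 t \<subseteq> {0..t}"
  unfolding Xi_def by auto

lemma Xi_fmeas: "Xi h \<tau> 0 t \<in> fmeasurable lborel"
proof -
  have "{0..t} \<in> fmeasurable lborel"
    by (intro fmeasurableI) (auto simp: emeasure_lborel_Icc_eq)
  then show ?thesis using fmeasurableI2 Xi_sub Xi_sets by metis
qed

lemma Xi_measure_mono:
  assumes "Xi h \<tau> 0 s \<subseteq> Xi h \<tau> 0 t"
  shows "measure lborel (Xi h \<tau> 0 s) \<le> measure lborel (Xi h \<tau> 0 t)"
  using measure_mono_fmeasurable[OF assms Xi_sets Xi_fmeas] .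

lemma Xi_le:
  assumes "0 \<le> t"
  shows "measure lborel (Xi h \<tau> 0 t) \<le> t"
proof -
  have "{0..t} \<in> fmeasurable lborel"
    by (intro fmeasurableI) (auto simp: emeasure_lborel_Icc_eq)
  then have "measure lborel (Xi h \<tau> 0 t) \<le> measure lborel {0..t}"
    using measure_mono_fmeasurable[OF Xi_sub Xi_sets] by blast
  then show ?thesis using assms by simp
qed

lemma Xi_mono: "s \<le> t \<Longrightarrow> Xi h \<tau> 0 s \<subseteq> Xi h \<tau> 0 t"
  unfolding Xi_def by auto

lemma Xi_gap:
  assumes "dos_seq h \<tau>" "1 \<le> m" "t < h (Suc m)"
  shows "Xi h \<tau> 0 t \<subseteq> Xi h \<tau> 0 (h m + \<tau> m)"
proof
  fix x assume x: "x \<in> Xi h \<tau> 0 t"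
  then obtain k where k: "k \<ge> 1" "x \<in> H_int h \<tau> k" "0 \<le> x" "x \<le> t"
    unfolding Xi_def by auto
  have xk: "h k \<le> x" "x \<le> h k + \<tau> k" using k(2) dos_nonneg[OF assms(1) k(1)]
    unfolding H_int_def by auto
  show "x \<in> Xi h \<tau> 0 (h m + \<tau> m)"
  proof (cases "k \<le> m")
    case True
    have "h k + \<tau> k \<le> h m + \<tau> m"
    proof (cases "k = m")
      case False
      then have "h k + \<tau> k < h m" using dos_mono[OF assms(1) k(1)] True by simp
      then show ?thesis using dos_nonneg[OF assms(1,2)] by simp
    qed simp
    then show ?thesis using x xk k unfolding Xi_def by auto
  next
    case False
    then have "h (Suc m) \<le> h k" using dos_mono_le[OF assms(1)] by simp
    then show ?thesis using xk k assms(3) by simp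
  qed
qed

lemma count_lower:
  assumes "dos_seq h \<tau>" "1 \<le> n"
  shows "ereal (real n) \<le> n_xi h 0 (h n)"
proof -
  define S where "S = {h k | k. k \<ge> 1} \<inter> {0..h n}"
  have sub: "h ` {1..n} \<subseteq> S"
    using dos_nonneg(1)[OF assms(1)] dos_mono_le[OF assms(1)] unfolding S_def by auto
  have inj: "inj_on h {1..n}"
    by (rule inj_onI) (metis atLeastAtMost_iff dos_mono(2)[OF assms(1)] less_irrefl linorder_neqE_nat)
  show ?thesis
  proof (cases "finite S")
    case True
    have "card (h ` {1..n}) \<le> card S" using card_mono[OF True sub] .
    then have "n \<le> card S" using card_image[OF inj] by simp
    then show ?thesis using True unfolding n_xi_def S_def[symmetric] by simp
  next
    case False
    then show ?thesis unfolding n_xi_def S_def[symmetric] by simp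
  qed
qed

lemma freq_ineq:
  assumes "dos_seq h \<tau>" "B \<in> freq_bounds h"
  obtains \<Lambda> :: nat where "\<Lambda> > 0" "B \<ge> 0" "\<And>n. 1 \<le> n \<Longrightarrow> real n \<le> real \<Lambda> + B * h n"
proof -
  obtain \<Lambda> :: nat where L: "\<Lambda> > 0" "B \<ge> 0" "\<forall>t\<ge>0. n_xi h 0 t \<le> ereal (real \<Lambda> + B * t)"
    using assms(2) unfolding freq_bounds_def by auto
  have "real n \<le> real \<Lambda> + B * h n" if "1 \<le> n" for n
  proof -
    have "ereal (real n) \<le> ereal (real \<Lambda> + B * h n)"
      using count_lower[OF assms(1) that] L(3) dos_nonneg(1)[OF assms(1) that] order_trans by blast
    then show ?thesis by simp
  qed
  then show ?thesis using L that by blast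
qed

lemma h_unbounded:
  assumes "dos_seq h \<tau>" "B \<in> freq_bounds h"
  shows "\<exists>n\<ge>1. h n > t"
proof -
  obtain \<Lambda> :: nat where L: "\<Lambda> > 0" "B \<ge> 0" "\<And>n. 1 \<le> n \<Longrightarrow> real n \<le> real \<Lambda> + B * h n"
    using freq_ineq[OF assms] by blast
  define n where "n = nat \<lceil>real \<Lambda> + B * max t 0\<rceil> + 1"
  have n1: "1 \<le> n" unfolding n_def by simp
  have "real n > real \<Lambda> + B * max t 0" unfolding n_def by linarith
  then have "B * h n > B * max t 0" using L(3)[OF n1] by linarith
  then have "h n > max t 0" using L(2) by (meson mult_left_mono not_less)
  then show ?thesis using n1 by auto
qed

lemma h_tendsto:
  assumes "dos_seq h \<tau>" "B \<in> freq_bounds h"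
  shows "filterlim h at_top sequentially"
proof (rule filterlim_at_top[THEN iffD2], intro allI)
  fix Z
  obtain n0 where n0: "n0 \<ge> 1" "h n0 > Z" using h_unbounded[OF assms] by blast
  show "\<forall>\<^sub>F x in sequentially. Z \<le> h x"
    unfolding eventually_sequentially
    using n0 dos_mono_le[OF assms(1) n0(1)] by (meson less_le_trans less_imp_le)
qed

lemma part2:
  assumes "dos_seq h \<tau>" "freq_bounds h \<noteq> {}"
  shows "limsup (\<lambda>n. ereal (real n / h n)) = inf_F h"
proof -
  obtain B0 where B0: "B0 \<in> freq_bounds h" using assms(2) by blast
  have htop: "filterlim h at_top sequentially" using h_tendsto[OF assms(1) B0] .
  have evpos: "\<forall>\<^sub>F n in sequentially. h n > 0"
    using htop filterlim_at_top_dense by blast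
  have up: "limsup (\<lambda>n. ereal (real n / h n)) \<le> ereal B" if B: "B \<in> freq_bounds h" for B
  proof -
    obtain \<Lambda> :: nat where L: "\<Lambda> > 0" "B \<ge> 0" "\<And>n. 1 \<le> n \<Longrightarrow> real n \<le> real \<Lambda> + B * h n"
      using freq_ineq[OF assms(1) B] by blast
    have ev: "\<forall>\<^sub>F n in sequentially. ereal (real n / h n) \<le> ereal (real \<Lambda> / h n + B)"
      using evpos eventually_ge_at_top[of "1::nat"]
    proof eventually_elim
      case (elim n)
      then have "real n / h n \<le> (real \<Lambda> + B * h n) / h n"
        using L(3) by (simp add: divide_right_mono)
      also have "\<dots> = real \<Lambda> / h n + B" using elim by (simp add: field_simps)
      finally show ?case by simp
    qed
    have lim: "((\<lambda>n. ereal (real \<Lambda> / h n + B)) \<longlongrightarrow> ereal B) sequentially"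
    proof -
      have "((\<lambda>n. real \<Lambda> / h n) \<longlongrightarrow> 0) sequentially"
        by (rule tendsto_divide_0[OF tendsto_const filterlim_at_top_imp_at_infinity[OF htop]])
      then have "((\<lambda>n. real \<Lambda> / h n + B) \<longlongrightarrow> 0 + B) sequentially"
        by (intro tendsto_add) auto
      then show ?thesis by (intro tendsto_ereal) simp
    qed
    have "limsup (\<lambda>n. ereal (real n / h n)) \<le> limsup (\<lambda>n. ereal (real \<Lambda> / h n + B))"
      by (rule Limsup_mono[OF ev])
    also have "\<dots> = ereal B" by (rule lim_imp_Limsup[OF _ lim]) simp
    finally show ?thesis .
  qed
  have ge: "limsup (\<lambda>n. ereal (real n / h n)) \<le> inf_F h"
    unfolding inf_F_def by (rule Inf_greatest) (use up in auto)
  define L where "L = limsup (\<lambda>n. ereal (real n / h n))"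
  have L0: "0 \<le> L" unfolding L_def
    by (rule le_Limsup) (use dos_nonneg(1)[OF assms(1)] in \<open>auto intro!: eventually_sequentiallyI[of 1]\<close>)
  have Lfin: "L \<le> ereal B0" using up[OF B0] L_def by simp
  obtain l where l: "L = ereal l" using L0 Lfin by (cases L) auto
  have le: "inf_F h \<le> L"
  proof (rule ereal_le_epsilon2)
    fix e :: real assume e: "0 < e"
    have "L < ereal (l + e)" using l e by simp
    then have "\<forall>\<^sub>F n in sequentially. ereal (real n / h n) < ereal (l + e)"
      unfolding L_def by (rule Limsup_lessD)
    then obtain N0 where N0: "\<And>n. n \<ge> N0 \<Longrightarrow> real n / h n < l + e"
      unfolding eventually_sequentially by auto
    define N where "N = max N0 2"
    have hpos: "h n > 0" if "n \<ge> 2" for n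
      using dos_mono(2)[OF assms(1), of 1 n] dos_nonneg(1)[OF assms(1), of 1] that by simp
    have bnd: "real n \<le> (l + e) * h n" if "n \<ge> N" for n
    proof -
      have "real n / h n < l + e" using N0 that unfolding N_def by simp
      moreover have "h n > 0" using hpos that unfolding N_def by simp
      ultimately show ?thesis by (simp add: divide_less_eq less_imp_le)
    qed
    have le0: "0 \<le> l + e" using L0 l e by simp
    have "l + e \<in> freq_bounds h"
      unfolding freq_bounds_def
    proof (intro CollectI conjI exI[of _ N] allI impI)
      show "0 \<le> l + e" by (rule le0)
      show "N > 0" unfolding N_def by simp
      fix t :: real assume t: "0 \<le> t"
      define S where "S = {h n | n. n \<ge> 1} \<inter> {0..t}"
      define K where "K = {1..nat \<lfloor>max (real N) ((l + e) * t)\<rfloor>}"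
      have "S \<subseteq> h ` K"
      proof
        fix x assume "x \<in> S"
        then obtain n where n: "n \<ge> 1" "x = h n" "h n \<le> t" unfolding S_def by auto
        have "real n \<le> max (real N) ((l + e) * t)"
        proof (cases "n \<ge> N")
          case True
          have "real n \<le> (l + e) * h n" using bnd True by simp
          also have "\<dots> \<le> (l + e) * t" using n(3) le0 by (simp add: mult_left_mono)
          finally show ?thesis by simp
        qed simp
        then have "n \<in> K" unfolding K_def using n(1) by (simp add: le_nat_floor)
        then show "x \<in> h ` K" using n by auto
      qed
      then have fin: "finite S" and "card S \<le> card (h ` K)"
        by (auto intro: finite_surj card_mono simp: K_def)
      then have "card S \<le> card K" using card_image_le[of K h] unfolding K_def by simp
      also have "card K = nat \<lfloor>max (real N) ((l + e) * t)\<rfloor>" unfolding K_def by simp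
      finally have "real (card S) \<le> max (real N) ((l + e) * t)" by linarith
      also have "\<dots> \<le> real N + (l + e) * t" using le0 t by simp
      finally show "n_xi h 0 t \<le> ereal (real N + (l + e) * t)"
        using fin unfolding n_xi_def S_def[symmetric] by simp
    qed
    then show "inf_F h \<le> L + ereal e" unfolding inf_F_def using l
      by (metis Inf_lower imageI plus_ereal.simps(1))
  qed
  show ?thesis using ge le L_def by simp
qed

lemma part1:
  assumes "dos_seq h \<tau>" "freq_bounds h \<noteq> {}" "\<Gamma> > 0" "\<And>n. 1 \<le> n \<Longrightarrow> \<tau> n \<le> \<Gamma>"
  shows "limsup (\<lambda>n. ereal (measure lborel (Xi h \<tau> 0 (h n + \<tau> n)) / (h n + \<tau> n))) = inf_D h \<tau>"
proof -
  define f where "f t = measure lborel (Xi h \<tau> 0 t)" for t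
  define E where "E n = h n + \<tau> n" for n
  obtain B0 where B0: "B0 \<in> freq_bounds h" using assms(2) by blast
  have htop: "filterlim h at_top sequentially" using h_tendsto[OF assms(1) B0] .
  have Etop: "filterlim E at_top sequentially"
    by (rule filterlim_at_top_mono[OF htop])
       (auto simp: E_def dos_nonneg(2)[OF assms(1)] intro!: eventually_sequentiallyI[of 1])
  have evpos: "\<forall>\<^sub>F n in sequentially. E n > 0"
    using Etop filterlim_at_top_dense by blast
  have Enn: "E n \<ge> 0" if "n \<ge> 1" for n
    using dos_nonneg[OF assms(1) that] unfolding E_def by simp
  have up: "limsup (\<lambda>n. ereal (f (E n) / E n)) \<le> ereal B" if B: "B \<in> dur_bounds h \<tau>" for B
  proof -
    obtain \<kappa> where K: "\<kappa> > 0" "\<And>t. t \<ge> 0 \<Longrightarrow> f t \<le> \<kappa> + B * t"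
      using B unfolding dur_bounds_def f_def by auto
    have ev: "\<forall>\<^sub>F n in sequentially. ereal (f (E n) / E n) \<le> ereal (\<kappa> / E n + B)"
      using evpos
    proof eventually_elim
      case (elim n)
      then have "f (E n) / E n \<le> (\<kappa> + B * E n) / E n"
        using K(2)[of "E n"] by (simp add: divide_right_mono)
      also have "\<dots> = \<kappa> / E n + B" using elim by (simp add: field_simps)
      finally show ?case by simp
    qed
    have lim: "((\<lambda>n. ereal (\<kappa> / E n + B)) \<longlongrightarrow> ereal B) sequentially"
    proof -
      have "((\<lambda>n. \<kappa> / E n) \<longlongrightarrow> 0) sequentially"
        by (rule tendsto_divide_0[OF tendsto_const filterlim_at_top_imp_at_infinity[OF Etop]])
      then have "((\<lambda>n. \<kappa> / E n + B) \<longlongrightarrow> 0 + B) sequentially"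
        by (intro tendsto_add) auto
      then show ?thesis by (intro tendsto_ereal) simp
    qed
    have "limsup (\<lambda>n. ereal (f (E n) / E n)) \<le> limsup (\<lambda>n. ereal (\<kappa> / E n + B))"
      by (rule Limsup_mono[OF ev])
    also have "\<dots> = ereal B" by (rule lim_imp_Limsup[OF _ lim]) simp
    finally show ?thesis .
  qed
  have ge: "limsup (\<lambda>n. ereal (f (E n) / E n)) \<le> inf_D h \<tau>"
    unfolding inf_D_def by (rule Inf_greatest) (use up in auto)
  define L where "L = limsup (\<lambda>n. ereal (f (E n) / E n))"
  have fnn: "f t \<ge> 0" for t unfolding f_def by simp
  have L0: "0 \<le> L" unfolding L_def
    by (rule le_Limsup) (use fnn Enn in \<open>auto intro!: eventually_sequentiallyI[of 1]\<close>)
  have fle: "f t \<le> t" if "t \<ge> 0" for t unfolding f_def using Xi_le that .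
  have L1: "L \<le> 1" unfolding L_def
  proof (rule Limsup_bounded, rule eventually_sequentiallyI[of 1])
    fix n :: nat assume "n \<ge> 1"
    then have "E n \<ge> 0" using Enn by simp
    then have "f (E n) / E n \<le> 1" using fle[of "E n"]
      by (cases "E n = 0") (auto simp: divide_le_eq)
    then show "ereal (f (E n) / E n) \<le> 1" by simp
  qed
  obtain l where l: "L = ereal l" using L0 L1 by (cases L) auto
  have le: "inf_D h \<tau> \<le> L"
  proof (rule ereal_le_epsilon2)
    fix e :: real assume e: "0 < e"
    define c where "c = l + e"
    have "L < ereal (l + e)" using l e by simp
    then have "\<forall>\<^sub>F n in sequentially. ereal (f (E n) / E n) < ereal (l + e)"
      unfolding L_def by (rule Limsup_lessD)
    then obtain N0 where N0: "\<And>n. n \<ge> N0 \<Longrightarrow> f (E n) / E n < l + e"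
      unfolding eventually_sequentially by auto
    define N where "N = max N0 2"
    have N1: "N \<ge> 1" unfolding N_def by simp
    have Epos: "E n > 0" if "n \<ge> 2" for n
      using dos_mono(2)[OF assms(1), of 1 n] dos_nonneg[OF assms(1), of 1] dos_nonneg[OF assms(1), of n] that
      unfolding E_def by simp
    have bnd: "f (E n) \<le> c * E n" if "n \<ge> N" for n
    proof -
      have "f (E n) / E n < l + e" using N0 that unfolding N_def by simp
      moreover have "E n > 0" using Epos that unfolding N_def by simp
      ultimately show ?thesis unfolding c_def by (simp add: divide_less_eq less_imp_le)
    qed
    have c0: "0 \<le> c" using L0 l e unfolding c_def by simp
    define \<kappa> where "\<kappa> = h N + c * \<Gamma> + 1"
    have hN: "h N \<ge> 0" using dos_nonneg[OF assms(1) N1] by simp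
    have cG: "c * \<Gamma> \<ge> 0" using c0 assms(3) by simp
    have kpos: "\<kappa> > 0" unfolding \<kappa>_def using hN cG by linarith
    have main: "f t \<le> \<kappa> + c * t" if t: "t \<ge> 0" for t
    proof (cases "t < h N")
      case True
      have "c * t \<ge> 0" using c0 t by simp
      then show ?thesis using fle[OF t] True cG unfolding \<kappa>_def by linarith
    next
      case False
      define M where "M = {n. 1 \<le> n \<and> h n \<le> t}"
      obtain n0 where n0: "n0 \<ge> 1" "h n0 > t" using h_unbounded[OF assms(1) B0] by blast
      have "M \<subseteq> {..<n0}"
      proof
        fix n assume "n \<in> M"
        then have "h n \<le> t" by (simp add: M_def)
        show "n \<in> {..<n0}"
        proof (rule ccontr)
          assume "n \<notin> {..<n0}"
          then have "n0 \<le> n" by simp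
          then have "h n0 \<le> h n" using dos_mono_le[OF assms(1) n0(1)] by simp
          then show False using \<open>h n \<le> t\<close> n0(2) by simp
        qed
      qed
      then have finM: "finite M" using finite_subset by blast
      have NM: "N \<in> M" using False N1 unfolding M_def by simp
      define m where "m = Max M"
      have mM: "m \<in> M" unfolding m_def using finM NM by (intro Max_in) auto
      have Nm: "N \<le> m" unfolding m_def by (rule Max_ge[OF finM NM])
      have m1: "m \<ge> 1" and hm: "h m \<le> t" using mM unfolding M_def by auto
      have "Suc m \<notin> M"
      proof
        assume "Suc m \<in> M"
        then have "Suc m \<le> m" unfolding m_def by (rule Max_ge[OF finM])
        then show False by simp
      qed
      then have hSm: "t < h (Suc m)" unfolding M_def by auto
      have "f t \<le> f (E m)" unfolding f_def E_def
        by (rule Xi_measure_mono[OF Xi_gap[OF assms(1) m1 hSm]])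
      also have "\<dots> \<le> c * E m" using bnd Nm by simp
      also have "\<dots> \<le> c * (t + \<Gamma>)"
        using assms(4)[OF m1] hm c0 unfolding E_def by (intro mult_left_mono) auto
      also have "\<dots> \<le> \<kappa> + c * t" unfolding \<kappa>_def using hN by (simp add: algebra_simps)
      finally show ?thesis .
    qed
    have "min c 1 \<in> dur_bounds h \<tau>"
      unfolding dur_bounds_def
    proof (intro CollectI conjI exI[of _ \<kappa>] allI impI)
      show "0 \<le> min c 1" using c0 by simp
      show "min c 1 \<le> 1" by simp
      show "\<kappa> > 0" by (rule kpos)
      fix t :: real assume t: "0 \<le> t"
      show "measure lborel (Xi h \<tau> 0 t) \<le> \<kappa> + min c 1 * t"
        using main[OF t] fle[OF t] kpos unfolding f_def
        by (cases "c \<le> 1") (auto simp: min_def)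
    qed
    then have "inf_D h \<tau> \<le> ereal (min c 1)" unfolding inf_D_def by (metis Inf_lower imageI)
    also have "\<dots> \<le> L + ereal e" using l unfolding c_def by simp
    finally show "inf_D h \<tau> \<le> L + ereal e" .
  qed
  show ?thesis using ge le unfolding L_def f_def E_def by simp
qed

theorem lemma2:
  fixes h \<tau> :: "nat \<Rightarrow> real"
  assumes "dos_seq h \<tau>" and "\<not> edge_case h \<tau>"
  shows "limsup (\<lambda>n. ereal (measure lborel (Xi h \<tau> 0 (h n + \<tau> n)) / (h n + \<tau> n))) = inf_D h \<tau>
     \<and> limsup (\<lambda>n. ereal (real n / h n)) = inf_F h"
proof -
  have "inf_F h \<noteq> \<infinity>" using assms(2) unfolding edge_case_def by auto
  then have F: "freq_bounds h \<noteq> {}" unfolding inf_F_def by (auto simp: top_ereal_def)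
  obtain \<Gamma> where G: "\<Gamma> > 0" "\<And>n. 1 \<le> n \<Longrightarrow> \<tau> n \<le> \<Gamma>"
    using assms(2) unfolding edge_case_def by (auto simp: not_less)
  show ?thesis using part1[OF assms(1) F G] part2[OF assms(1) F] by simp
qed

end
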